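(* Let $a>0$, $\epsilon>0$, and let $\Xi'\subseteq\Xi^+$ be a finite nonempty set. Put $\mathcal{A}'=\{\xi\in\Xi:\sum_{x\in\mathcal{X}}H_A(\mu,x)\xi(x)\ge a\ \forall\mu\in\Xi'\}$ and $\mathcal{A}=\{\xi\in\Xi^+:\phi_A(\xi)\ge a\}$. Let $(\xi',t')$ be an optimal solution of the linear program: maximize $t$ over $\xi\in\mathcal{A}'$, $t\in\mathbb{R}$, subject to $\sum_{x\in\mathcal{X}}H_D(\mu,x)\xi(x)\ge t$ for all $\mu\in\Xi'$. Then $\mathcal{A}\subseteq\mathcal{A}'$ and $\sup_{\xi\in\mathcal{A}}\phi_D(\xi)\le t'$. Consequently, if $\xi'\in\Xi^+$, $\phi_A(\xi')\ge a$ and $t'-\phi_D(\xi')<\epsilon$, then $\xi'\in\mathcal{A}$ and $\phi_D(\xi')>\sup_{\xi\in\mathcal{A}}\phi_D(\xi)-\epsilon$.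
   Context: $\mathcal{X}$ finite, $f:\mathcal{X}\to\mathbb{R}^p$, $\Xi$ the probability measures on $\mathcal{X}$, $M(\xi)=\sum_x f(x)f^\top(x)\xi(x)$, $\Xi^+=\{\mu\in\Xi: M(\mu)\text{ nonsingular}\}$. $\phi_D(\xi)=\det^{1/p}M(\xi)$ and $\phi_A(\xi)=1/\mathrm{tr}M^{-1}(\xi)$ for $\xi\in\Xi^+$. $H_D(\mu,x)=\frac{\det^{1/p}[M(\mu)]}{p}f^\top(x)M^{-1}(\mu)f(x)$ and $H_A(\mu,x)=\|M^{-1}(\mu)f(x)\|^2/[\mathrm{tr}M^{-1}(\mu)]^2$ for $\mu\in\Xi^+$. *)

theory Defs
  imports "HOL-Analysis.Analysis"
begin

text \<open>Design space X is a finite type 'x; regressor f : 'x => R^p with p = CARD('p).\<close>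

definition designs :: "('x::finite \<Rightarrow> real) set" where
  "designs = {\<xi>. (\<forall>x. 0 \<le> \<xi> x) \<and> sum \<xi> UNIV = 1}"

definition info_matrix :: "('x::finite \<Rightarrow> real^'p) \<Rightarrow> ('x \<Rightarrow> real) \<Rightarrow> real^'p^'p" where
  "info_matrix f \<xi> = (\<Sum>x\<in>UNIV. \<xi> x *\<^sub>R (\<chi> i j. (f x $ i) * (f x $ j)))"

definition designs_plus :: "('x::finite \<Rightarrow> real^'p) \<Rightarrow> ('x \<Rightarrow> real) set" where
  "designs_plus f = {\<xi> \<in> designs. invertible (info_matrix f \<xi>)}"

definition phi_D :: "('x::finite \<Rightarrow> real^'p) \<Rightarrow> ('x \<Rightarrow> real) \<Rightarrow> real" where
  "phi_D f \<xi> = det (info_matrix f \<xi>) powr (1 / real CARD('p))"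

definition phi_A :: "('x::finite \<Rightarrow> real^'p) \<Rightarrow> ('x \<Rightarrow> real) \<Rightarrow> real" where
  "phi_A f \<xi> = 1 / trace (matrix_inv (info_matrix f \<xi>))"

definition H_D :: "('x::finite \<Rightarrow> real^'p) \<Rightarrow> ('x \<Rightarrow> real) \<Rightarrow> 'x \<Rightarrow> real" where
  "H_D f \<mu> x = phi_D f \<mu> / real CARD('p) * (f x \<bullet> (matrix_inv (info_matrix f \<mu>) *v f x))"

definition H_A :: "('x::finite \<Rightarrow> real^'p) \<Rightarrow> ('x \<Rightarrow> real) \<Rightarrow> 'x \<Rightarrow> real" where
  "H_A f \<mu> x = (norm (matrix_inv (info_matrix f \<mu>) *v f x))\<^sup>2 / (trace (matrix_inv (info_matrix f \<mu>)))\<^sup>2"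

end

theory Submission
  imports Defs "Jordan_Normal_Form.Schur_Decomposition"
begin


definition cq :: "complex mat \<Rightarrow> complex vec \<Rightarrow> complex" where
  "cq A v = (\<Sum>i<dim_vec v. cnj (v$i) * (A *\<^sub>v v) $ i)"

definition cPD :: "complex mat \<Rightarrow> nat \<Rightarrow> bool" where
  "cPD A n = (\<forall>v \<in> carrier_vec n. v \<noteq> 0\<^sub>v n \<longrightarrow> (\<exists>r>0. cq A v = complex_of_real r))"

definition ctr :: "complex mat \<Rightarrow> complex" where
  "ctr A = (\<Sum>i<dim_row A. A$$(i,i))"

lemma ctr_comm:
  assumes "X \<in> carrier_mat n m" "Y \<in> carrier_mat m n"
  shows "ctr (X * Y) = ctr (Y * X)"
proof -
  have "ctr (X * Y) = (\<Sum>i<n. \<Sum>k<m. X$$(i,k) * Y$$(k,i))"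
    using assms by (simp add: ctr_def scalar_prod_def atLeast0LessThan)
  also have "\<dots> = (\<Sum>k<m. \<Sum>i<n. Y$$(k,i) * X$$(i,k))"
    by (subst sum.swap) (simp add: mult.commute)
  also have "\<dots> = ctr (Y * X)"
    using assms by (simp add: ctr_def scalar_prod_def atLeast0LessThan)
  finally show ?thesis .
qed

lemma cq_smult:
  assumes "A \<in> carrier_mat n n" "v \<in> carrier_vec n"
  shows "cq (A) (v) * e = (\<Sum>i<n. cnj (v$i) * (e \<cdot>\<^sub>v (A *\<^sub>v v)) $ i)"
  using assms by (simp add: cq_def sum_distrib_right sum_distrib_left mult_ac)

lemma key_jnf:
  assumes A: "A \<in> carrier_mat n n" and B: "B \<in> carrier_mat n n" and X: "X \<in> carrier_mat n n"
    and AX: "A * X = B" and pA: "cPD A n" and pB: "cPD B n" and n: "n > 0"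
  shows "\<exists>d t. Determinant.det X = complex_of_real d \<and> ctr X = complex_of_real t \<and> 0 < d
       \<and> d powr (1 / real n) \<le> t / real n"
proof -
  obtain es where cp: "char_poly X = (\<Prod> a \<leftarrow> es. [:- a, 1:])" and len: "length es = n"
    using char_poly_factorized[OF X] by blast
  obtain B' P Q where sd: "schur_decomposition X es = (B',P,Q)" by (cases "schur_decomposition X es")
  from schur_decomposition[OF X cp sd] have sim: "similar_mat_wit X B' P Q"
    and ut: "upper_triangular B'" and dg: "diag_mat B' = es" by auto
  note sw = similar_mat_witD2[OF X sim]
  have "Determinant.det X = Determinant.det P * Determinant.det B' * Determinant.det Q"
    using sw by (simp add: det_mult[of _ n])
  also have "\<dots> = Determinant.det B'"
  proof -
    have "Determinant.det P * Determinant.det Q = 1"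
      using det_mult[OF sw(6) sw(7)] sw(1) det_one by simp
    then show ?thesis by (metis mult.commute mult.left_commute mult.right_neutral)
  qed
  also have "\<dots> = prod_list es" using sw dg det_upper_triangular[OF ut sw(5)] by simp
  finally have detX: "Determinant.det X = prod_list es" .
  have "ctr X = ctr (P * (B' * Q))" using sw by (simp add: assoc_mult_mat[of _ n n _ n _ n])
  also have "\<dots> = ctr ((B' * Q) * P)" by (rule ctr_comm[of _ n n]) (use sw in auto)
  also have "\<dots> = ctr B'" using sw by (simp add: assoc_mult_mat[of _ n n _ n _ n])
  also have "\<dots> = sum_list es" unfolding dg[symmetric] ctr_def diag_mat_def
    using sw by (simp add: sum_list_sum_nth atLeast0LessThan)
  finally have trX: "ctr X = sum_list es" .
  have pos: "\<exists>r>0. e = complex_of_real r" if e: "e \<in> set es" for e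
  proof -
    have "poly (char_poly X) e = 0" unfolding cp using e
      by (induction es) (auto simp: poly_prod_list)
    then have "eigenvalue X e" using eigenvalue_root_char_poly[OF X] by simp
    then obtain v where ev: "eigenvector X v e" unfolding eigenvalue_def by blast
    then have v: "v \<in> carrier_vec n" "v \<noteq> 0\<^sub>v n" "X *\<^sub>v v = e \<cdot>\<^sub>v v"
      using X unfolding eigenvector_def by auto
    obtain rA where rA: "rA > 0" "cq A v = complex_of_real rA" using pA v unfolding cPD_def by blast
    obtain rB where rB: "rB > 0" "cq B v = complex_of_real rB" using pB v unfolding cPD_def by blast
    have "B *\<^sub>v v = A *\<^sub>v (X *\<^sub>v v)" using AX A X v by (metis assoc_mult_mat_vec)
    also have "\<dots> = e \<cdot>\<^sub>v (A *\<^sub>v v)" using v A by (simp add: mult_mat_vec)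
    finally have "cq B v = cq A v * e" using cq_smult[OF A v(1)] v A B by (simp add: cq_def)
    then have "e = complex_of_real (rB / rA)" using rA rB by (simp add: field_simps)
    then show ?thesis using rA rB by (intro exI[of _ "rB/rA"]) auto
  qed
  define rs where "rs = map Re es"
  have es_rs: "es = map complex_of_real rs"
    unfolding rs_def by (rule nth_equalityI) (use pos nth_mem in fastforce)+
  have rs_pos: "\<And>i. i < n \<Longrightarrow> rs ! i > 0"
    using pos nth_mem len unfolding rs_def by fastforce
  have lenr: "length rs = n" using len rs_def by simp
  define d where "d = (\<Prod>i<n. rs ! i)"
  define t where "t = (\<Sum>i<n. rs ! i)"
  have "Determinant.det X = complex_of_real d" unfolding detX es_rs d_def
    by (simp add: prod.list_conv_set_nth lenr atLeast0LessThan)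
  moreover have "ctr X = complex_of_real t" unfolding trX es_rs t_def
    by (simp add: sum_list_sum_nth lenr atLeast0LessThan)
  moreover have "d > 0" unfolding d_def using rs_pos by (intro prod_pos) auto
  moreover have "d powr (1 / real n) \<le> t / real n"
    using arith_geom_mean[of "{..<n}" "\<lambda>i. rs ! i"] n rs_pos
    unfolding d_def t_def by (force simp add: sum_divide_distrib)
  ultimately show ?thesis by blast
qed


lemma matrix_inv_both:
  fixes A :: "'a::semiring_1^'n^'n"
  assumes "invertible A"
  shows "A ** matrix_inv A = Finite_Cartesian_Product.mat 1" "matrix_inv A ** A = Finite_Cartesian_Product.mat 1"
  using someI_ex[OF assms[unfolded invertible_def]] unfolding matrix_inv_def by auto

definition conv :: "(nat \<Rightarrow> 'p::finite) \<Rightarrow> real^'p^'p \<Rightarrow> complex mat" where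
  "conv g A = Matrix.mat CARD('p) CARD('p) (\<lambda>(i,j). complex_of_real (A $ g i $ g j))"

lemma conv_carrier[simp]: "conv (g::nat\<Rightarrow>'p::finite) A \<in> carrier_mat CARD('p) CARD('p)"
  by (simp add: conv_def)

lemma conv_dim[simp]: "dim_row (conv (g::nat\<Rightarrow>'p::finite) A) = CARD('p)" "dim_col (conv (g::nat\<Rightarrow>'p::finite) A) = CARD('p)"
  by (simp_all add: conv_def)

lemma conv_index[simp]: "i < CARD('p) \<Longrightarrow> j < CARD('p) \<Longrightarrow>
   conv g A $$ (i,j) = complex_of_real (A $ g i $ (g j :: 'p::finite))"
  by (simp add: conv_def)

locale bij_idx =
  fixes g :: "nat \<Rightarrow> 'p::finite"
  assumes bij: "bij_betw g {..<CARD('p)} UNIV"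
begin

lemma sum_reidx: "(\<Sum>c\<in>UNIV. F c) = (\<Sum>k<CARD('p). F (g k))"
  using sum.reindex_bij_betw[OF bij, of F] by simp

lemma prod_reidx: "(\<Prod>c\<in>UNIV. F c) = (\<Prod>k<CARD('p). F (g k))"
  using prod.reindex_bij_betw[OF bij, of F] by simp

lemma conv_mult: "conv g (A ** B) = conv g A * conv g B"
  by (rule eq_matI)
     (auto simp: scalar_prod_def matrix_matrix_mult_def sum_reidx atLeast0LessThan)

lemma conv_one: "conv g (Finite_Cartesian_Product.mat 1) = 1\<^sub>m CARD('p)"
proof (rule eq_matI)
  fix i j assume ij: "i < dim_row (1\<^sub>m CARD('p))" "j < dim_col (1\<^sub>m CARD('p))"
  have "g i = g j \<longleftrightarrow> i = j" using bij ij unfolding bij_betw_def inj_on_def by auto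
  then show "conv g (Finite_Cartesian_Product.mat 1) $$ (i, j) = 1\<^sub>m CARD('p) $$ (i, j)" using ij by (simp add: Finite_Cartesian_Product.mat_def)
qed auto

lemma conv_tr: "ctr (conv g A) = complex_of_real (trace A)"
  by (simp add: ctr_def trace_def sum_reidx)

lemma conv_det: "Determinant.det (conv g A) = complex_of_real (Determinants.det A)"
proof -
  let ?n = "CARD('p)"
  define h where "h = inv_into {..<?n} g"
  have bh: "bij_betw h UNIV {..<?n}" unfolding h_def by (rule bij_betw_inv_into[OF bij])
  have hg: "h (g x) = x" if "x \<in> {..<?n}" for x
    unfolding h_def using bij that by (simp add: bij_betw_inv_into_left)
  have gh: "g (h y) = y" for y
    unfolding h_def using bij by (simp add: bij_betw_inv_into_right)
  have injg: "inj_on g {..<?n}" using bij bij_betw_def by blast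
  define \<phi> where "\<phi> = (\<lambda>p. map_permutation {..<?n} g p)"
  define \<psi> where "\<psi> = (\<lambda>q. map_permutation UNIV h q)"
  have bphi: "bij_betw \<phi> {p. p permutes {..<?n}} {q. q permutes (UNIV::'p set)}"
  proof (rule bij_betwI[where g = \<psi>])
    show "\<phi> \<in> {p. p permutes {..<?n}} \<rightarrow> {q. q permutes UNIV}"
      unfolding \<phi>_def using map_permutation_permutes[OF bij] by auto
    show "\<psi> \<in> {q. q permutes UNIV} \<rightarrow> {p. p permutes {..<?n}}"
      unfolding \<psi>_def using map_permutation_permutes[OF bh] by auto
    show "\<psi> (\<phi> p) = p" if "p \<in> {p. p permutes {..<?n}}" for p
      unfolding \<psi>_def \<phi>_def using map_permutation_compose_inv[OF bij _ hg] that by auto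
    show "\<phi> (\<psi> q) = q" if "q \<in> {q. q permutes (UNIV::'p set)}" for q
      unfolding \<psi>_def \<phi>_def using map_permutation_compose_inv[OF bh _ gh] that by auto
  qed
  have "Determinants.det A = (\<Sum>q\<in>{q. q permutes (UNIV::'p set)}. of_int (sign q) * (\<Prod>a\<in>UNIV. A $ a $ q a))"
    by (simp add: Determinants.det_def)
  also have "\<dots> = (\<Sum>p\<in>{p. p permutes {..<?n}}. of_int (sign (\<phi> p)) * (\<Prod>a\<in>UNIV. A $ a $ \<phi> p a))"
    by (rule sum.reindex_bij_betw[OF bphi, symmetric])
  also have "\<dots> = (\<Sum>p\<in>{p. p permutes {..<?n}}. of_int (sign p) * (\<Prod>i<?n. A $ g i $ g (p i)))"
  proof (rule sum.cong[OF refl])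
    fix p assume p: "p \<in> {p. p permutes {..<?n}}"
    have "sign (\<phi> p) = sign p" unfolding \<phi>_def using sign_map_permutation[OF injg] p by auto
    moreover have "(\<Prod>a\<in>UNIV. A $ a $ \<phi> p a) = (\<Prod>i<?n. A $ g i $ g (p i))"
      unfolding prod_reidx \<phi>_def by (rule prod.cong[OF refl]) (simp add: map_permutation_apply[OF injg])
    ultimately show "of_int (sign (\<phi> p)) * (\<Prod>a\<in>UNIV. A $ a $ \<phi> p a) = of_int (sign p) * (\<Prod>i<?n. A $ g i $ g (p i))"
      by simp
  qed
  finally have *: "Determinants.det A = (\<Sum>p\<in>{p. p permutes {..<?n}}. of_int (sign p) * (\<Prod>i<?n. A $ g i $ g (p i)))" .
  have "Determinant.det (conv g A) = (\<Sum>p\<in>{p. p permutes {..<?n}}. of_int (sign p) * (\<Prod>i<?n. conv g A $$ (i, p i)))"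
    by (simp add: det_def'[OF conv_carrier] atLeast0LessThan)
  also have "\<dots> = (\<Sum>p\<in>{p. p permutes {..<?n}}. of_int (sign p) * (\<Prod>i<?n. complex_of_real (A $ g i $ g (p i))))"
    by (intro sum.cong refl arg_cong2[where f="(*)"] prod.cong) (auto intro!: conv_index dest: permutes_in_image)
  also have "\<dots> = complex_of_real (Determinants.det A)"
    unfolding * by simp
  finally show ?thesis .
qed

end


no_notation Matrix.vec_index (infixl "$" 100)

lemma info_entry: "info_matrix f \<xi> $ a $ b = (\<Sum>x\<in>UNIV. \<xi> x * (f x $ a * f x $ b))"
  by (simp add: info_matrix_def sum_component)

lemma cnj_mult_self: "cnj z * z = complex_of_real ((cmod z)\<^sup>2)"
  using complex_norm_square[of z] by (simp only: mult.commute)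

lemma cPD_one: "cPD (1\<^sub>m n) n"
  unfolding cPD_def
proof (intro ballI impI)
  fix v :: "complex vec" assume v: "v \<in> carrier_vec n" "v \<noteq> 0\<^sub>v n"
  have cq: "cq (1\<^sub>m n) v = complex_of_real (\<Sum>i<n. (cmod (vec_index v i))\<^sup>2)"
    using v by (simp add: cq_def cnj_mult_self)
  obtain i where i: "i < n" "vec_index v i \<noteq> 0" proof -
    have "\<exists>i<n. vec_index v i \<noteq> 0"
    proof (rule ccontr)
      assume "\<not> ?thesis"
      then have "v = 0\<^sub>v n" using v(1) by (intro eq_vecI) auto
      then show False using v(2) by simp
    qed
    then show ?thesis using that by blast
  qed
  have "(\<Sum>i<n. (cmod (vec_index v i))\<^sup>2) > 0"
    by (rule sum_pos2[of _ i]) (use i in auto)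
  then show "\<exists>r>0. cq (1\<^sub>m n) v = complex_of_real r" using cq by blast
qed

context bij_idx
begin

lemma cPD_info:
  assumes xi: "\<xi> \<in> designs" and inv: "invertible (info_matrix f \<xi>)"
  shows "cPD (conv g (info_matrix (f :: _ \<Rightarrow> real^'p) \<xi>)) CARD('p)"
  unfolding cPD_def
proof (intro ballI impI)
  let ?n = "CARD('p)"
  let ?N = "info_matrix f \<xi>"
  fix v :: "complex vec" assume v: "v \<in> carrier_vec ?n" "v \<noteq> 0\<^sub>v ?n"
  define c where "c x = (\<Sum>j<?n. complex_of_real (f x $ g j) * vec_index v j)" for x
  have Nv: "vec_index (conv g ?N *\<^sub>v v) i = (\<Sum>x\<in>UNIV. complex_of_real (\<xi> x) * complex_of_real (f x $ g i) * c x)"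
    if i: "i < ?n" for i
  proof -
    have "vec_index (conv g ?N *\<^sub>v v) i = (\<Sum>j<?n. complex_of_real (?N $ g i $ g j) * vec_index v j)"
      using v i by (simp add: scalar_prod_def atLeast0LessThan)
    also have "\<dots> = (\<Sum>j<?n. \<Sum>x\<in>UNIV. complex_of_real (\<xi> x) * complex_of_real (f x $ g i) * (complex_of_real (f x $ g j) * vec_index v j))"
      by (simp add: info_entry sum_distrib_right sum_distrib_left mult_ac)
    also have "\<dots> = (\<Sum>x\<in>UNIV. complex_of_real (\<xi> x) * complex_of_real (f x $ g i) * c x)"
      unfolding c_def by (subst sum.swap) (simp add: sum_distrib_left)
    finally show ?thesis .
  qed
  have "cq (conv g ?N) v = (\<Sum>i<?n. cnj (vec_index v i) * (\<Sum>x\<in>UNIV. complex_of_real (\<xi> x) * complex_of_real (f x $ g i) * c x))"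
    using v Nv by (simp add: cq_def)
  also have "\<dots> = (\<Sum>i<?n. \<Sum>x\<in>UNIV. cnj (vec_index v i) * (complex_of_real (\<xi> x) * complex_of_real (f x $ g i) * c x))"
    by (simp add: sum_distrib_left)
  also have "\<dots> = (\<Sum>x\<in>UNIV. \<Sum>i<?n. cnj (vec_index v i) * (complex_of_real (\<xi> x) * complex_of_real (f x $ g i) * c x))"
    by (rule sum.swap)
  also have "\<dots> = (\<Sum>x\<in>UNIV. complex_of_real (\<xi> x) * ((\<Sum>i<?n. complex_of_real (f x $ g i) * cnj (vec_index v i)) * c x))"
    apply (intro sum.cong refl)
    apply (simp only: sum_distrib_left sum_distrib_right)
    apply (intro sum.cong refl)
    apply (simp only: mult_ac)
    done
  also have "\<dots> = (\<Sum>x\<in>UNIV. complex_of_real (\<xi> x) * (cnj (c x) * c x))"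
    unfolding c_def by (simp only: cnj_sum complex_cnj_mult complex_cnj_complex_of_real)
  also have "\<dots> = complex_of_real (\<Sum>x\<in>UNIV. \<xi> x * (cmod (c x))\<^sup>2)"
    by (simp add: cnj_mult_self)
  finally have cq: "cq (conv g ?N) v = complex_of_real (\<Sum>x\<in>UNIV. \<xi> x * (cmod (c x))\<^sup>2)" .
  have nn: "\<And>x. 0 \<le> \<xi> x" using xi by (simp add: designs_def)
  have "(\<Sum>x\<in>UNIV. \<xi> x * (cmod (c x))\<^sup>2) > 0"
  proof (rule ccontr)
    assume neg: "\<not> ?thesis"
    then have "(\<Sum>x\<in>UNIV. \<xi> x * (cmod (c x))\<^sup>2) = 0"
    proof -
      have "0 \<le> (\<Sum>x\<in>UNIV. \<xi> x * (cmod (c x))\<^sup>2)"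
        by (intro sum_nonneg mult_nonneg_nonneg nn zero_le_power2)
      then show ?thesis using neg by linarith
    qed
    then have z: "\<xi> x * (cmod (c x))\<^sup>2 = 0" for x
      using sum_nonneg_eq_0_iff[of UNIV "\<lambda>x. \<xi> x * (cmod (c x))\<^sup>2"] nn by auto
    have z2: "complex_of_real (\<xi> x) * c x = 0" for x using z[of x] by auto
    have "vec_index (conv g ?N *\<^sub>v v) i = 0" if "i < ?n" for i
      unfolding Nv[OF that]
    proof (intro sum.neutral ballI)
      fix x
      have "complex_of_real (\<xi> x) * complex_of_real (f x $ g i) * c x
           = (complex_of_real (\<xi> x) * c x) * complex_of_real (f x $ g i)"
        by (simp only: mult_ac)
      also have "\<dots> = 0" by (simp only: z2 mult_zero_left)
      finally show "complex_of_real (\<xi> x) * complex_of_real (f x $ g i) * c x = 0" .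
    qed
    then have "conv g ?N *\<^sub>v v = 0\<^sub>v ?n"
      by (intro eq_vecI) auto
    then have "conv g (matrix_inv ?N) *\<^sub>v (conv g ?N *\<^sub>v v) = 0\<^sub>v ?n"
      using conv_carrier[of g "matrix_inv ?N"] by auto
    moreover have "conv g (matrix_inv ?N) *\<^sub>v (conv g ?N *\<^sub>v v) = v"
      using v by (simp add: assoc_mult_mat_vec[symmetric, of _ ?n ?n _ ?n] conv_mult[symmetric]
          matrix_inv_both[OF inv] conv_one)
    ultimately show False using v by simp
  qed
  then show "\<exists>r>0. cq (conv g ?N) v = complex_of_real r" using cq by blast
qed

end


no_notation Matrix.scalar_prod (infix "\<bullet>" 70)


lemma trace_info:
  fixes f :: "'x::finite \<Rightarrow> real^'p"
  shows "(\<Sum>x\<in>UNIV. \<xi> x * (f x \<bullet> (Z *v f x))) = trace (Z ** info_matrix f \<xi>)"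
proof -
  have "(\<Sum>x\<in>UNIV. \<xi> x * (f x \<bullet> (Z *v f x))) = (\<Sum>x\<in>UNIV. \<Sum>i\<in>UNIV. \<Sum>k\<in>UNIV. Z$i$k * (\<xi> x * (f x $ k * f x $ i)))"
    by (simp add: inner_vec_def matrix_vector_mult_def sum_distrib_left mult_ac)
  also have "\<dots> = (\<Sum>i\<in>UNIV. \<Sum>x\<in>UNIV. \<Sum>k\<in>UNIV. Z$i$k * (\<xi> x * (f x $ k * f x $ i)))"
    by (rule sum.swap)
  also have "\<dots> = (\<Sum>i\<in>UNIV. \<Sum>k\<in>UNIV. \<Sum>x\<in>UNIV. Z$i$k * (\<xi> x * (f x $ k * f x $ i)))"
    by (intro sum.cong refl sum.swap)
  also have "\<dots> = trace (Z ** info_matrix f \<xi>)"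
    by (simp add: trace_def matrix_matrix_mult_def info_entry sum_distrib_left)
  finally show ?thesis .
qed

lemma info_sym: "transpose (info_matrix f \<xi>) = info_matrix f \<xi>"
  by (simp add: Finite_Cartesian_Product.vec_eq_iff transpose_def info_entry mult.commute)

lemma inv_sym:
  fixes M :: "real^'n^'n"
  assumes "invertible M" "transpose M = M"
  shows "transpose (matrix_inv M) = matrix_inv M"
proof -
  let ?P = "matrix_inv M"
  have "transpose ?P ** M = Finite_Cartesian_Product.mat 1"
    using matrix_inv_both(1)[OF assms(1)] assms(2)
    by (metis matrix_transpose_mul transpose_mat)
  then have "transpose ?P = transpose ?P ** (M ** ?P)"
    using matrix_inv_both(1)[OF assms(1)] by simp
  also have "\<dots> = (transpose ?P ** M) ** ?P" by (simp add: matrix_mul_assoc)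
  also have "\<dots> = ?P" using \<open>transpose ?P ** M = _\<close> by simp
  finally show ?thesis .
qed

lemma dot_mats: "(X *v v) \<bullet> (Y *v (v::real^'n)) = v \<bullet> ((transpose X ** Y) *v v)"
proof -
  have "X *v v = v v* transpose X" using transpose_matrix_vector[of "transpose X" v] by simp
  then show ?thesis by (simp only: dot_lmul_matrix matrix_vector_mul_assoc)
qed

lemma weighted_CS:
  fixes u w :: "'x::finite \<Rightarrow> real^'p"
  assumes nn: "\<And>x. \<xi> x \<ge> 0"
  shows "(\<Sum>x\<in>UNIV. \<xi> x * (u x \<bullet> w x))\<^sup>2 \<le> (\<Sum>x\<in>UNIV. \<xi> x * (u x \<bullet> u x)) * (\<Sum>x\<in>UNIV. \<xi> x * (w x \<bullet> w x))"
proof -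
  define a where "a = (\<lambda>(x,i). sqrt (\<xi> x) * u x $ i)"
  define b where "b = (\<lambda>(x,i). sqrt (\<xi> x) * w x $ i)"
  have sq: "sqrt (\<xi> x) * sqrt (\<xi> x) = \<xi> x" for x using nn[of x] by simp
  have e: "(\<Sum>x\<in>UNIV. \<xi> x * (u x \<bullet> w x)) = (\<Sum>p\<in>UNIV \<times> UNIV. (\<lambda>(x,i). sqrt (\<xi> x) * u x $ i) p * (\<lambda>(x,i). sqrt (\<xi> x) * w x $ i) p)"
    for u w :: "'x \<Rightarrow> real^'p"
  proof -
    have "(\<Sum>x\<in>UNIV. \<xi> x * (u x \<bullet> w x)) = (\<Sum>x\<in>UNIV. \<Sum>i\<in>UNIV. (sqrt (\<xi> x) * u x $ i) * (sqrt (\<xi> x) * w x $ i))"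
    proof (intro sum.cong refl)
      fix x
      have "\<xi> x * (u x \<bullet> w x) = (\<Sum>i\<in>UNIV. (sqrt (\<xi> x) * sqrt (\<xi> x)) * (u x $ i * w x $ i))"
        using nn[of x] by (simp add: inner_vec_def sum_distrib_left)
      also have "\<dots> = (\<Sum>i\<in>UNIV. (sqrt (\<xi> x) * u x $ i) * (sqrt (\<xi> x) * w x $ i))"
        by (intro sum.cong refl) (simp only: mult_ac)
      finally show "\<xi> x * (u x \<bullet> w x) = (\<Sum>i\<in>UNIV. (sqrt (\<xi> x) * u x $ i) * (sqrt (\<xi> x) * w x $ i))" .
    qed
    also have "\<dots> = (\<Sum>p\<in>UNIV \<times> UNIV. (\<lambda>(x,i). sqrt (\<xi> x) * u x $ i) p * (\<lambda>(x,i). sqrt (\<xi> x) * w x $ i) p)"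
      by (simp add: sum.cartesian_product case_prod_beta)
    finally show ?thesis .
  qed
  have e2: "(\<Sum>x\<in>UNIV. \<xi> x * (u x \<bullet> u x)) = (\<Sum>p\<in>UNIV \<times> UNIV. ((\<lambda>(x,i). sqrt (\<xi> x) * u x $ i) p)\<^sup>2)"
    for u :: "'x \<Rightarrow> real^'p"
    unfolding e power2_eq_square ..
  show ?thesis unfolding e
    using Cauchy_Schwarz_ineq_sum[of "\<lambda>(x,i). sqrt (\<xi> x) * u x $ i" "\<lambda>(x,i). sqrt (\<xi> x) * w x $ i" "UNIV \<times> UNIV"]
    by (simp only: power2_eq_square)
qed


lemma designs_plus_D: "\<xi> \<in> designs_plus f \<Longrightarrow> \<xi> \<in> designs \<and> invertible (info_matrix f \<xi>)"
  by (simp add: designs_plus_def)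

lemma A_bound:
  fixes f :: "'x::finite \<Rightarrow> real^'p"
  assumes mu: "\<mu> \<in> designs_plus f" and xi: "\<xi> \<in> designs_plus f" and pos: "0 < phi_A f \<xi>"
  shows "phi_A f \<xi> \<le> (\<Sum>x\<in>UNIV. H_A f \<mu> x * \<xi> x)"
proof -
  define M where "M = info_matrix f \<mu>"
  define N where "N = info_matrix f \<xi>"
  define P where "P = matrix_inv M"
  define Q where "Q = matrix_inv N"
  have invM: "invertible M" and dM: "\<mu> \<in> designs" using designs_plus_D[OF mu] M_def by auto
  have invN: "invertible N" and dN: "\<xi> \<in> designs" using designs_plus_D[OF xi] N_def by auto
  have nnM: "\<And>x. 0 \<le> \<mu> x" and nnN: "\<And>x. 0 \<le> \<xi> x" using dM dN by (auto simp: designs_def)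
  have Psym: "transpose P = P" unfolding P_def M_def by (rule inv_sym[OF invM[unfolded M_def] info_sym])
  have Qsym: "transpose Q = Q" unfolding Q_def N_def by (rule inv_sym[OF invN[unfolded N_def] info_sym])
  have QN: "Q ** N = Finite_Cartesian_Product.mat 1" unfolding Q_def by (rule matrix_inv_both(2)[OF invN])
  have PM: "P ** M = Finite_Cartesian_Product.mat 1" unfolding P_def by (rule matrix_inv_both(2)[OF invM])
  have wsum: "(\<Sum>x\<in>UNIV. w x * ((X *v f x) \<bullet> (Y *v f x))) = trace (transpose X ** Y ** info_matrix f w)"
    for w X Y by (simp add: dot_mats trace_info)
  define U where "U = (\<Sum>x\<in>UNIV. \<xi> x * ((P *v f x) \<bullet> (P *v f x)))"
  have B: "(\<Sum>x\<in>UNIV. \<xi> x * ((P *v f x) \<bullet> (Q *v f x))) = trace P"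
    unfolding wsum N_def[symmetric] Psym by (simp add: matrix_mul_assoc[symmetric] QN)
  have C: "(\<Sum>x\<in>UNIV. \<xi> x * ((Q *v f x) \<bullet> (Q *v f x))) = trace Q"
    unfolding wsum N_def[symmetric] Qsym by (simp add: matrix_mul_assoc[symmetric] QN)
  have CS: "(trace P)\<^sup>2 \<le> U * trace Q"
    using weighted_CS[where \<xi>=\<xi> and u="\<lambda>x. P *v f x" and w="\<lambda>x. Q *v f x", OF nnN] unfolding B C U_def .
  have trQ: "trace Q > 0" using pos unfolding phi_A_def Q_def N_def by (simp add: zero_less_divide_1_iff)
  have trP: "trace P > 0"
  proof -
    define V where "V = (\<Sum>x\<in>UNIV. \<mu> x * ((P *v f x) \<bullet> (P *v f x)))"
    have V: "V = trace P"
      unfolding V_def wsum M_def[symmetric] Psym by (simp add: matrix_mul_assoc[symmetric] PM)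
    have W: "(\<Sum>x\<in>UNIV. \<mu> x * ((P *v f x) \<bullet> (Finite_Cartesian_Product.mat 1 *v f x))) = of_nat CARD('p)"
      unfolding wsum M_def[symmetric] Psym by (simp add: PM trace_I)
    have CS2: "(of_nat CARD('p))\<^sup>2 \<le> V * (\<Sum>x\<in>UNIV. \<mu> x * ((Finite_Cartesian_Product.mat 1 *v f x) \<bullet> (Finite_Cartesian_Product.mat 1 *v f x)))"
      using weighted_CS[where \<xi>=\<mu> and u="\<lambda>x. P *v f x" and w="\<lambda>x. Finite_Cartesian_Product.mat 1 *v f x", OF nnM] unfolding W V_def .
    have "V \<ge> 0" unfolding V_def by (intro sum_nonneg mult_nonneg_nonneg nnM inner_ge_zero)
    moreover have "V \<noteq> 0" using CS2 by (auto simp: zero_less_card_finite)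
    ultimately show ?thesis using V by simp
  qed
  have HA: "(\<Sum>x\<in>UNIV. H_A f \<mu> x * \<xi> x) = U / (trace P)\<^sup>2"
    unfolding H_A_def U_def P_def[symmetric] M_def[symmetric]
    by (simp add: sum_divide_distrib power2_norm_eq_inner mult.commute)
  have "phi_A f \<xi> = 1 / trace Q" unfolding phi_A_def Q_def N_def ..
  also have "\<dots> \<le> U / (trace P)\<^sup>2" using CS trQ trP by (simp add: field_simps)
  finally show ?thesis using HA by simp
qed


context bij_idx
begin

lemma det_info_pos:
  fixes f :: "'x::finite \<Rightarrow> real^'p"
  assumes xi: "\<xi> \<in> designs_plus f"
  shows "Determinants.det (info_matrix f \<xi>) > 0"
proof -
  let ?n = "CARD('p)"
  let ?N = "info_matrix f \<xi>"
  have inv: "invertible ?N" and d: "\<xi> \<in> designs" using designs_plus_D[OF xi] by auto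
  obtain dd t where k: "Determinant.det (conv g ?N) = complex_of_real dd" "0 < dd"
    using key_jnf[of "1\<^sub>m ?n" ?n "conv g ?N" "conv g ?N"] cPD_one cPD_info[OF d inv]
    by (auto simp: zero_less_card_finite)
  then show ?thesis unfolding conv_det by simp
qed

lemma D_bound:
  fixes f :: "'x::finite \<Rightarrow> real^'p"
  assumes mu: "\<mu> \<in> designs_plus f" and xi: "\<xi> \<in> designs_plus f"
  shows "phi_D f \<xi> \<le> (\<Sum>x\<in>UNIV. H_D f \<mu> x * \<xi> x)"
proof -
  let ?n = "CARD('p)"
  define M where "M = info_matrix f \<mu>"
  define N where "N = info_matrix f \<xi>"
  define P where "P = matrix_inv M"
  define S where "S = P ** N"
  have invM: "invertible M" and dM: "\<mu> \<in> designs" using designs_plus_D[OF mu] M_def by auto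
  have invN: "invertible N" and dN: "\<xi> \<in> designs" using designs_plus_D[OF xi] N_def by auto
  have MS: "M ** S = N" unfolding S_def P_def
    by (simp add: matrix_mul_assoc matrix_inv_both(1)[OF invM])
  have "conv g M * conv g S = conv g N" using MS conv_mult by metis
  then obtain d t where k: "Determinant.det (conv g S) = complex_of_real d" "ctr (conv g S) = complex_of_real t"
    "0 < d" "d powr (1 / real ?n) \<le> t / real ?n"
    using key_jnf[of "conv g M" ?n "conv g N" "conv g S"] cPD_info[OF dN invN[unfolded N_def]]
      cPD_info[OF dM invM[unfolded M_def]]
    by (auto simp: zero_less_card_finite M_def N_def)
  have detS: "Determinants.det S = d" using k(1) unfolding conv_det by simp
  have trS: "trace S = t" using k(2) unfolding conv_tr by simp
  have detM: "Determinants.det M > 0" unfolding M_def by (rule det_info_pos[OF mu])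
  have detN: "Determinants.det N = Determinants.det M * d" using MS detS det_mul by metis
  have "phi_D f \<xi> = (Determinants.det M * d) powr (1 / real ?n)"
    unfolding phi_D_def N_def[symmetric] detN ..
  also have "\<dots> = Determinants.det M powr (1 / real ?n) * d powr (1 / real ?n)"
    using detM k(3) by (simp add: powr_mult)
  also have "\<dots> \<le> Determinants.det M powr (1 / real ?n) * (t / real ?n)"
    by (rule mult_left_mono[OF k(4)]) simp
  also have "\<dots> = (\<Sum>x\<in>UNIV. H_D f \<mu> x * \<xi> x)"
  proof -
    have "(\<Sum>x\<in>UNIV. H_D f \<mu> x * \<xi> x) = phi_D f \<mu> / real ?n * (\<Sum>x\<in>UNIV. \<xi> x * (f x \<bullet> (P *v f x)))"
      unfolding H_D_def P_def M_def by (simp add: sum_distrib_left mult_ac)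
    also have "(\<Sum>x\<in>UNIV. \<xi> x * (f x \<bullet> (P *v f x))) = t"
      unfolding trace_info N_def[symmetric] S_def[symmetric] trS ..
    finally show ?thesis unfolding phi_D_def M_def by simp
  qed
  finally show ?thesis .
qed

end


lemma exists_bij_idx: "\<exists>g. bij_idx (g :: nat \<Rightarrow> 'p::finite)"
proof -
  obtain h where "bij_betw h {0..<card (UNIV::'p set)} (UNIV::'p set)"
    using ex_bij_betw_nat_finite[of "UNIV::'p set"] by auto
  then show ?thesis unfolding bij_idx_def atLeast0LessThan by blast
qed

lemma bounds:
  fixes f :: "'x::finite \<Rightarrow> real^'p"
  assumes mu: "\<mu> \<in> designs_plus f" and xi: "\<xi> \<in> designs_plus f"
  shows "phi_D f \<xi> \<le> (\<Sum>x\<in>UNIV. H_D f \<mu> x * \<xi> x)"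
proof -
  obtain g :: "nat \<Rightarrow> 'p" where "bij_idx g" using exists_bij_idx by blast
  then interpret bij_idx g .
  show ?thesis by (rule D_bound[OF mu xi])
qed

theorem mainTheorem5:
  fixes f :: "'x::finite \<Rightarrow> real^'p"
    and a \<epsilon> t' :: real
    and \<Xi>' :: "('x \<Rightarrow> real) set"
    and \<xi>' :: "'x \<Rightarrow> real"
    and A' A :: "('x \<Rightarrow> real) set"
  assumes "a > 0" and "\<epsilon> > 0"
    and "finite \<Xi>'" and "\<Xi>' \<noteq> {}" and "\<Xi>' \<subseteq> designs_plus f"
    and A'_def: "A' = {\<xi> \<in> designs. \<forall>\<mu>\<in>\<Xi>'. (\<Sum>x\<in>UNIV. H_A f \<mu> x * \<xi> x) \<ge> a}"
    and A_def: "A = {\<xi> \<in> designs_plus f. phi_A f \<xi> \<ge> a}"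
    and feasible: "\<xi>' \<in> A'" "\<forall>\<mu>\<in>\<Xi>'. (\<Sum>x\<in>UNIV. H_D f \<mu> x * \<xi>' x) \<ge> t'"
    and optimal: "\<forall>\<xi> t. \<xi> \<in> A' \<and> (\<forall>\<mu>\<in>\<Xi>'. (\<Sum>x\<in>UNIV. H_D f \<mu> x * \<xi> x) \<ge> t) \<longrightarrow> t \<le> t'"
  shows "A \<subseteq> A' \<and> (SUP \<xi>\<in>A. ereal (phi_D f \<xi>)) \<le> ereal t' \<and>
    ((\<xi>' \<in> designs_plus f \<and> phi_A f \<xi>' \<ge> a \<and> t' - phi_D f \<xi>' < \<epsilon>) \<longrightarrow>
      (\<xi>' \<in> A \<and> ereal (phi_D f \<xi>') > (SUP \<xi>\<in>A. ereal (phi_D f \<xi>)) - ereal \<epsilon>))"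
proof -
  have AA: "A \<subseteq> A'"
  proof
    fix \<xi> assume "\<xi> \<in> A"
    then have xi: "\<xi> \<in> designs_plus f" and ge: "phi_A f \<xi> \<ge> a" unfolding A_def by auto
    have "\<forall>\<mu>\<in>\<Xi>'. (\<Sum>x\<in>UNIV. H_A f \<mu> x * \<xi> x) \<ge> a"
    proof
      fix \<mu> assume "\<mu> \<in> \<Xi>'"
      then have mu: "\<mu> \<in> designs_plus f" using assms(5) by auto
      show "(\<Sum>x\<in>UNIV. H_A f \<mu> x * \<xi> x) \<ge> a"
        using A_bound[OF mu xi] ge assms(1) by linarith
    qed
    then show "\<xi> \<in> A'" unfolding A'_def using designs_plus_D[OF xi] by auto
  qed
  have SUPle: "(SUP \<xi>\<in>A. ereal (phi_D f \<xi>)) \<le> ereal t'"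
  proof (rule SUP_least)
    fix \<xi> assume xA: "\<xi> \<in> A"
    then have xi: "\<xi> \<in> designs_plus f" unfolding A_def by auto
    have "\<forall>\<mu>\<in>\<Xi>'. (\<Sum>x\<in>UNIV. H_D f \<mu> x * \<xi> x) \<ge> phi_D f \<xi>"
      using bounds[OF _ xi] assms(5) by auto
    then have "phi_D f \<xi> \<le> t'" using optimal AA xA by blast
    then show "ereal (phi_D f \<xi>) \<le> ereal t'" by simp
  qed
  have third: "(\<xi>' \<in> designs_plus f \<and> phi_A f \<xi>' \<ge> a \<and> t' - phi_D f \<xi>' < \<epsilon>) \<longrightarrow>
      (\<xi>' \<in> A \<and> ereal (phi_D f \<xi>') > (SUP \<xi>\<in>A. ereal (phi_D f \<xi>)) - ereal \<epsilon>)"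
  proof
    assume h: "\<xi>' \<in> designs_plus f \<and> phi_A f \<xi>' \<ge> a \<and> t' - phi_D f \<xi>' < \<epsilon>"
    have "(SUP \<xi>\<in>A. ereal (phi_D f \<xi>)) - ereal \<epsilon> \<le> ereal t' - ereal \<epsilon>"
      by (rule ereal_minus_mono[OF SUPle order.refl])
    also have "\<dots> = ereal (t' - \<epsilon>)" by simp
    also have "\<dots> < ereal (phi_D f \<xi>')" using h by simp
    finally show "\<xi>' \<in> A \<and> ereal (phi_D f \<xi>') > (SUP \<xi>\<in>A. ereal (phi_D f \<xi>)) - ereal \<epsilon>"
      using h unfolding A_def by auto
  qed
  show ?thesis using AA SUPle third by blast
qed


end
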